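(* Consider the setting in which a division may give each player an arbitrary piece that is a finite union of intervals (pieces need not be connected). In this setting, for every instance (any number $n$ of players with any nonatomic valuations) and every $\alpha>1$, the instance does not exhibit an $\alpha$-dumping paradox with respect to the utilitarian welfare, nor with respect to the egalitarian welfare. Moreover, there is no envy-free partial division that Pareto dominates every envy-free complete division.
   Context: A cake is the interval $[0,1]$. There are $n$ players $1,\dots,n$; each player $i$ has a valuation $v_i$, a nonatomic countably additive probability measure on the Borel subsets of $[0,1]$ (so $v_i([0,1])=1$). In this statement a division $x$ is a sequence $(X_1,\dots,X_n)$ of pairwise disjoint sets, each a finite union of intervals of $[0,1]$, with $X_i$ the piece of player $i$; it is complete if $X_1\cup\dots\cup X_n$ covers $[0,1]$ up to finitely many points, and partial otherwise. Write $u_i(x,j)=v_i(X_j)$. The division $x$ is envy-free if $u_i(x,i)\ge u_i(x,j)$ for all $i,j$. The utilitarian welfare is $u(x)=\sum_{i=1}^n u_i(x,i)$ and the egalitarian welfare is $eg(x)=\min_i u_i(x,i)$. For a welfare function $w$ and $\alpha>1$, an instance exhibits an $\alpha$-dumping paradox with respect to $w$ if there is an envy-free partial division $y$ such that $w(y)\ge\alpha\, w(x)$ for every envy-free complete division $x$. A division $y$ Pareto dominates $x$ if $u_i(y,i)\ge u_i(x,i)$ for all $i$ with at least one strict inequality. *)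

theory Defs
  imports "HOL-Probability.Probability"
begin

text \<open>Players are 1..n; a valuation of player i is v i, a probability measure on the
Borel sets of the cake [0,1].\<close>

definition nonatomic :: "'a measure \<Rightarrow> bool" where
  "nonatomic M \<longleftrightarrow> (\<forall>A\<in>sets M. measure M A > 0 \<longrightarrow>
      (\<exists>B\<in>sets M. B \<subseteq> A \<and> 0 < measure M B \<and> measure M B < measure M A))"

definition valuation :: "real measure \<Rightarrow> bool" where
  "valuation M \<longleftrightarrow> prob_space M \<and> space M = {0..1}
     \<and> sets M = sets (restrict_space borel {0..1}) \<and> nonatomic M"

definition finite_union_intervals :: "real set \<Rightarrow> bool" where
  "finite_union_intervals X \<longleftrightarrow> X \<subseteq> {0..1} \<and>
     (\<exists>F. finite F \<and> (\<forall>I\<in>F. is_interval I) \<and> X = \<Union>F)"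

definition division :: "nat \<Rightarrow> (nat \<Rightarrow> real set) \<Rightarrow> bool" where
  "division n X \<longleftrightarrow> (\<forall>i\<in>{1..n}. finite_union_intervals (X i)) \<and>
     (\<forall>i\<in>{1..n}. \<forall>j\<in>{1..n}. i \<noteq> j \<longrightarrow> X i \<inter> X j = {})"

definition complete_div :: "nat \<Rightarrow> (nat \<Rightarrow> real set) \<Rightarrow> bool" where
  "complete_div n X \<longleftrightarrow> division n X \<and> finite ({0..1} - (\<Union>i\<in>{1..n}. X i))"

definition partial_div :: "nat \<Rightarrow> (nat \<Rightarrow> real set) \<Rightarrow> bool" where
  "partial_div n X \<longleftrightarrow> division n X \<and> \<not> finite ({0..1} - (\<Union>i\<in>{1..n}. X i))"

definition util :: "(nat \<Rightarrow> real measure) \<Rightarrow> (nat \<Rightarrow> real set) \<Rightarrow> nat \<Rightarrow> nat \<Rightarrow> real" where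
  "util v X i j = measure (v i) (X j)"

definition envy_free :: "nat \<Rightarrow> (nat \<Rightarrow> real measure) \<Rightarrow> (nat \<Rightarrow> real set) \<Rightarrow> bool" where
  "envy_free n v X \<longleftrightarrow> (\<forall>i\<in>{1..n}. \<forall>j\<in>{1..n}. util v X i i \<ge> util v X i j)"

definition utilitarian :: "nat \<Rightarrow> (nat \<Rightarrow> real measure) \<Rightarrow> (nat \<Rightarrow> real set) \<Rightarrow> real" where
  "utilitarian n v X = (\<Sum>i\<in>{1..n}. util v X i i)"

definition egalitarian :: "nat \<Rightarrow> (nat \<Rightarrow> real measure) \<Rightarrow> (nat \<Rightarrow> real set) \<Rightarrow> real" where
  "egalitarian n v X = Min ((\<lambda>i. util v X i i) ` {1..n})"

definition dumping_paradox ::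
  "nat \<Rightarrow> (nat \<Rightarrow> real measure) \<Rightarrow> (nat \<Rightarrow> (nat \<Rightarrow> real measure) \<Rightarrow> (nat \<Rightarrow> real set) \<Rightarrow> real)
     \<Rightarrow> real \<Rightarrow> bool" where
  "dumping_paradox n v w \<alpha> \<longleftrightarrow> (\<exists>Y. partial_div n Y \<and> envy_free n v Y \<and>
     (\<forall>X. complete_div n X \<and> envy_free n v X \<longrightarrow> w n v Y \<ge> \<alpha> * w n v X))"

definition pareto_dominates :: "nat \<Rightarrow> (nat \<Rightarrow> real measure) \<Rightarrow> (nat \<Rightarrow> real set) \<Rightarrow> (nat \<Rightarrow> real set) \<Rightarrow> bool" where
  "pareto_dominates n v Y X \<longleftrightarrow> (\<forall>i\<in>{1..n}. util v Y i i \<ge> util v X i i) \<and>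
     (\<exists>i\<in>{1..n}. util v Y i i > util v X i i)"

end

theory Submission
  imports Defs
begin

definition cube :: "nat \<Rightarrow> (nat \<Rightarrow> real) set" where
  "cube N = {x. (\<forall>i<N. 0 \<le> x i \<and> x i \<le> 1) \<and> (\<forall>i\<ge>N. x i = 0)}"

lemma cube_PiE: "cube N = PiE UNIV (\<lambda>i. if i < N then {0..1} else {0})"
proof (intro set_eqI iffI)
  fix x assume "x \<in> cube N" then show "x \<in> PiE UNIV (\<lambda>i. if i < N then {0..1} else {0})"
    unfolding cube_def by (auto simp: PiE_iff)
next
  fix x assume "x \<in> PiE UNIV (\<lambda>i. if i < N then {0..1::real} else {0})"
  then have "\<And>i. x i \<in> (if i < N then {0..1} else {0})" by (auto simp: PiE_iff)
  then have "(\<forall>i<N. 0 \<le> x i \<and> x i \<le> 1) \<and> (\<forall>i\<ge>N. x i = 0)"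
    by (metis atLeastAtMost_iff not_le singletonD)
  then show "x \<in> cube N" unfolding cube_def by simp
qed

lemma compact_cube: "compact (cube N)"
proof -
  have "compactin (product_topology (\<lambda>i. euclidean) UNIV) (PiE UNIV (\<lambda>i. if i < N then {0..1::real} else {0}))"
    by (subst compactin_PiE) (auto simp: compactin_euclidean_iff)
  then show ?thesis
    by (simp add: cube_PiE euclidean_product_topology compactin_euclidean_iff)
qed

lemma dist_fun_bound:
  fixes x y :: "nat \<Rightarrow> real"
  assumes "\<And>i. \<bar>x i - y i\<bar> \<le> d" "0 \<le> d"
  shows "dist x y \<le> 2 * d"
proof -
  have s: "summable (\<lambda>n. (1/2::real)^n * d)"
    by (intro summable_mult2) (simp add: summable_geometric_iff)
  have "dist x y = (\<Sum>n. (1/2)^n * min (dist (x (from_nat n)) (y (from_nat n))) 1)"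
    unfolding dist_fun_def by simp
  also have "\<dots> \<le> (\<Sum>n. (1/2::real)^n * d)"
  proof (rule suminf_le)
    show "(1/2)^n * min (dist (x (from_nat n)) (y (from_nat n))) 1 \<le> (1/2::real)^n * d" for n
      using assms(1)[of "from_nat n"] by (intro mult_left_mono) (auto simp: dist_real_def)
    show "summable (\<lambda>n. (1/2::real)^n * d)" by (rule s)
    show "summable (\<lambda>n. (1/2::real)^n * min (dist (x (from_nat n)) (y (from_nat n))) 1)"
      by (rule summable_comparison_test'[of "\<lambda>n. (1/2::real)^n"]) (auto simp: summable_geometric_iff)
  qed
  also have "\<dots> = 2 * d"
    using suminf_geometric[of "1/2::real"] by (simp add: suminf_mult2[symmetric])
  finally show ?thesis .
qed

lemma cube_dist_coord:
  assumes "x \<in> cube N" "y \<in> cube N" "\<And>i. i < N \<Longrightarrow> \<bar>x i - y i\<bar> \<le> d" "0 \<le> d"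
  shows "dist x y \<le> 2 * d"
proof (rule dist_fun_bound)
  show "\<bar>x i - y i\<bar> \<le> d" for i
    using assms unfolding cube_def by (cases "i < N") auto
qed fact

lemma brouwer_cube_fun:
  assumes cont: "continuous_on (cube N) f" and maps: "\<And>x. x \<in> cube N \<Longrightarrow> f x \<in> cube N"
  shows "\<exists>x\<in>cube N. f x = x"
proof (rule ccontr)
  assume nofix: "\<not> (\<exists>x\<in>cube N. f x = x)"
  define g where "g x = (\<Sum>i<N. \<bar>f x i - x i\<bar>)" for x
  have contc: "continuous_on (cube N) (\<lambda>x. f x i)" for i
    using continuous_on_product_then_coordinatewise[OF cont] .
  have contg: "continuous_on (cube N) g"
    unfolding g_def
  proof (rule continuous_on_sum)
    fix i
    have c1: "continuous_on (cube N) (\<lambda>x::nat\<Rightarrow>real. x i)"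
      by (rule continuous_on_subset[OF continuous_on_product_coordinates]) simp
    show "continuous_on (cube N) (\<lambda>x. \<bar>f x i - x i\<bar>)"
      by (rule continuous_on_rabs[OF continuous_on_diff[OF contc c1]])
  qed
  have ne: "cube N \<noteq> {}"
  proof -
    have "(\<lambda>_. 0) \<in> cube N" unfolding cube_def by simp
    then show ?thesis by blast
  qed
  obtain x0 where x0: "x0 \<in> cube N" "\<And>y. y \<in> cube N \<Longrightarrow> g x0 \<le> g y"
    using continuous_attains_inf[OF compact_cube ne contg] by blast
  define d where "d = g x0"
  have gpos: "g x > 0" if "x \<in> cube N" for x
  proof -
    have "f x \<noteq> x" using nofix that by blast
    then obtain i where i: "f x i \<noteq> x i" by blast
    have "i < N"
    proof (rule ccontr)
      assume "\<not> i < N"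
      then show False using i maps[OF that] that unfolding cube_def by auto
    qed
    have "0 < \<bar>f x i - x i\<bar>" using i by auto
    also have "\<dots> \<le> g x" unfolding g_def
      by (rule member_le_sum) (use \<open>i < N\<close> in auto)
    finally show ?thesis .
  qed
  have dpos: "d > 0" using gpos[OF x0(1)] d_def by simp
  define \<eta> where "\<eta> = d / (2 * (real N + 1))"
  have etapos: "\<eta> > 0" using dpos unfolding \<eta>_def by (simp add: field_simps)
  have "\<forall>i. \<exists>\<delta>>0. \<forall>x\<in>cube N. \<forall>y\<in>cube N. dist y x < \<delta> \<longrightarrow> dist (f y i) (f x i) < \<eta>"
  proof
    fix i
    have "uniformly_continuous_on (cube N) (\<lambda>x. f x i)"
      by (rule compact_uniformly_continuous[OF contc compact_cube])
    then show "\<exists>\<delta>>0. \<forall>x\<in>cube N. \<forall>y\<in>cube N. dist y x < \<delta> \<longrightarrow> dist (f y i) (f x i) < \<eta>"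
      unfolding uniformly_continuous_on_def using etapos by blast
  qed
  then obtain \<Delta> where \<Delta>': "\<forall>i. \<Delta> i > 0 \<and> (\<forall>x\<in>cube N. \<forall>y\<in>cube N. dist y x < \<Delta> i \<longrightarrow> dist (f y i) (f x i) < \<eta>)"
    by (auto simp only: choice_iff)
  then have \<Delta>: "\<And>i. \<Delta> i > 0"
    "\<And>i x y. x \<in> cube N \<Longrightarrow> y \<in> cube N \<Longrightarrow> dist y x < \<Delta> i \<Longrightarrow> dist (f y i) (f x i) < \<eta>"
    by blast+
  define \<delta> where "\<delta> = Min (insert 1 (\<Delta> ` {..<N}))"
  have \<delta>pos: "\<delta> > 0" unfolding \<delta>_def using \<Delta>(1) by auto
  have \<delta>le: "\<delta> \<le> \<Delta> i" if "i < N" for i unfolding \<delta>_def using that by auto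
  obtain p :: nat where p: "real p > 2 / \<delta> + 1 / \<eta> + 1"
    using reals_Archimedean2 by blast
  have ppos: "p > 0" using p \<delta>pos etapos
  proof -
    have "0 < 2 / \<delta> + 1 / \<eta> + 1" using \<delta>pos etapos by (simp add: add_pos_pos)
    then have "0 < real p" using p by linarith
    then show ?thesis by simp
  qed
  have p1: "2 / real p < \<delta>"
  proof -
    have "0 < 1 / \<eta>" using etapos by simp
    then have "2 / \<delta> < real p" using p by linarith
    then have "2 < \<delta> * real p" using \<delta>pos by (simp add: divide_less_eq mult.commute)
    then show ?thesis using ppos by (simp add: divide_less_eq mult.commute)
  qed
  have p2: "1 / real p < \<eta>"
  proof -
    have "0 < 2 / \<delta>" using \<delta>pos by simp
    then have "1 / \<eta> < real p" using p by linarith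
    then have "1 < \<eta> * real p" using etapos by (simp add: divide_less_eq mult.commute)
    then show ?thesis using ppos by (simp add: divide_less_eq mult.commute)
  qed
  define pt where "pt q = (\<lambda>j. if j < N then real (q j) / real p else 0)" for q :: "nat \<Rightarrow> nat"
  have pt_cube: "pt q \<in> cube N" if "\<And>j. j < N \<Longrightarrow> q j \<le> p" for q
    unfolding cube_def pt_def using that ppos by auto
  define lab where "lab y i = (if y i = 0 then 0 else if y i = 1 then 1 else if y i \<le> f y i then 0 else (1::nat))"
    for y :: "nat \<Rightarrow> real" and i
  have lab0: "y i \<le> f y i" if "lab y i = 0" "y \<in> cube N" "i < N" for y i
    using that maps[OF that(2)] unfolding lab_def cube_def by (auto split: if_splits)
  have lab1: "f y i \<le> y i" if "lab y i = 1" "y \<in> cube N" "i < N" for y i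
    using that maps[OF that(2)] unfolding lab_def cube_def by (auto split: if_splits)
  have lab01: "lab y i = 0 \<or> lab y i = 1" for y i unfolding lab_def by auto
  obtain q where q: "\<forall>i<N. q i < p"
    "\<forall>i<N. \<exists>r s. (\<forall>j<N. q j \<le> r j \<and> r j \<le> q j + 1) \<and> (\<forall>j<N. q j \<le> s j \<and> s j \<le> q j + 1)
        \<and> lab (pt r) i \<noteq> lab (pt s) i"
  proof (rule kuhn_lemma[of p N "\<lambda>x i. lab (pt x) i"])
    show "0 < p" by (rule ppos)
    show "\<forall>x. (\<forall>i<N. x i \<le> p) \<longrightarrow> (\<forall>i<N. lab (pt x) i = 0 \<or> lab (pt x) i = 1)"
      using lab01 by blast
    show "\<forall>x. (\<forall>i<N. x i \<le> p) \<longrightarrow> (\<forall>i<N. x i = 0 \<longrightarrow> lab (pt x) i = 0)"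
      unfolding lab_def pt_def by auto
    show "\<forall>x. (\<forall>i<N. x i \<le> p) \<longrightarrow> (\<forall>i<N. x i = p \<longrightarrow> lab (pt x) i = 1)"
      unfolding lab_def pt_def using ppos by auto
  qed blast
  define z where "z = pt q"
  have zc: "z \<in> cube N" unfolding z_def by (rule pt_cube) (use q(1) in force)
  have near: "\<bar>f z i - z i\<bar> \<le> \<eta> + 1 / real p" if i: "i < N" for i
  proof -
    obtain r s where rs: "\<forall>j<N. q j \<le> r j \<and> r j \<le> q j + 1" "\<forall>j<N. q j \<le> s j \<and> s j \<le> q j + 1"
      "lab (pt r) i \<noteq> lab (pt s) i"
      using q(2) i by blast
    have rc: "pt r \<in> cube N" by (rule pt_cube) (use rs(1) q(1) in force)
    have sc: "pt s \<in> cube N" by (rule pt_cube) (use rs(2) q(1) in force)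
    have gridnear: "\<bar>real a / real p - real b / real p\<bar> \<le> 1 / real p"
      if "b \<le> a" "a \<le> b + 1" for a b :: nat
    proof -
      have "\<bar>real a / real p - real b / real p\<bar> = \<bar>real a - real b\<bar> / real p"
        by (simp add: diff_divide_distrib[symmetric])
      also have "\<dots> \<le> 1 / real p"
        using that ppos by (intro divide_right_mono) auto
      finally show ?thesis .
    qed
    have cr: "\<bar>pt r j - z j\<bar> \<le> 1 / real p" if "j < N" for j
      using rs(1) that gridnear unfolding z_def pt_def by simp
    have cs: "\<bar>pt s j - z j\<bar> \<le> 1 / real p" if "j < N" for j
      using rs(2) that gridnear unfolding z_def pt_def by simp
    have "dist (pt r) z \<le> 2 * (1 / real p)"
      by (rule cube_dist_coord[OF rc zc cr]) auto
    then have dr: "dist (pt r) z < \<Delta> i" using p1 \<delta>le[OF i] by simp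
    have "dist (pt s) z \<le> 2 * (1 / real p)"
      by (rule cube_dist_coord[OF sc zc cs]) auto
    then have ds: "dist (pt s) z < \<Delta> i" using p1 \<delta>le[OF i] by simp
    have fr: "\<bar>f (pt r) i - f z i\<bar> < \<eta>" using \<Delta>(2)[OF zc rc dr] by (simp add: dist_real_def)
    have fs: "\<bar>f (pt s) i - f z i\<bar> < \<eta>" using \<Delta>(2)[OF zc sc ds] by (simp add: dist_real_def)
    consider "lab (pt r) i = 0" "lab (pt s) i = 1" | "lab (pt r) i = 1" "lab (pt s) i = 0"
      using rs(3) lab01 by metis
    then show ?thesis
    proof cases
      case 1
      have a: "pt r i \<le> f (pt r) i" by (rule lab0[OF 1(1) rc i])
      have b: "f (pt s) i \<le> pt s i" by (rule lab1[OF 1(2) sc i])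
      show ?thesis using a b fr fs cr[OF i] cs[OF i] unfolding abs_le_iff abs_less_iff by linarith
    next
      case 2
      have a: "pt s i \<le> f (pt s) i" by (rule lab0[OF 2(2) sc i])
      have b: "f (pt r) i \<le> pt r i" by (rule lab1[OF 2(1) rc i])
      show ?thesis using a b fr fs cr[OF i] cs[OF i] unfolding abs_le_iff abs_less_iff by linarith
    qed
  qed
  have "g z \<le> (\<Sum>i<N. \<eta> + 1 / real p)"
    unfolding g_def by (rule sum_mono) (use near in auto)
  also have "\<dots> = real N * (\<eta> + 1 / real p)" by simp
  also have "\<dots> \<le> real N * (2 * \<eta>)"
    using p2 by (intro mult_left_mono) auto
  also have "\<dots> < d"
    unfolding \<eta>_def using dpos by (simp add: field_simps)
  finally have "g z < d" .
  moreover have "d \<le> g z" using x0(2)[OF zc] d_def by simp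
  ultimately show False by simp
qed


lemma hall_aux:
  fixes E :: "'a \<Rightarrow> 'b set"
  shows "finite A \<Longrightarrow> card A = k \<Longrightarrow> (\<forall>a\<in>A. finite (E a)) \<Longrightarrow>
    (\<forall>S\<subseteq>A. card S \<le> card (\<Union> (E ` S))) \<Longrightarrow> \<exists>f. inj_on f A \<and> (\<forall>a\<in>A. f a \<in> E a)"
proof (induction k arbitrary: A E rule: less_induct)
  case (less k)
  note fin = less.prems(1) and ck = less.prems(2) and finE = less.prems(3) and H = less.prems(4)
  show ?case
  proof (cases "A = {}")
    case True then show ?thesis by auto
  next
    case nonempty: False
    have finU: "finite (\<Union> (E ` S))" if "S \<subseteq> A" for S
      using finE that fin by (meson finite_UN_I finite_subset subsetD)
    show ?thesis
    proof (cases "\<forall>S. S \<subseteq> A \<and> S \<noteq> {} \<and> S \<noteq> A \<longrightarrow> card S < card (\<Union> (E ` S))")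
      case True
      obtain a where a: "a \<in> A" using nonempty by blast
      have "card {a} \<le> card (\<Union> (E ` {a}))" using H a by blast
      then have "E a \<noteq> {}" by auto
      then obtain b where b: "b \<in> E a" by blast
      define A' where "A' = A - {a}"
      define E' where "E' x = E x - {b}" for x
      have "card A > 0" using a fin card_gt_0_iff by blast
      then have "card A' < k" unfolding A'_def using a fin ck by (simp add: card_Diff_singleton)
      moreover have "finite A'" unfolding A'_def using fin by simp
      moreover have "\<forall>x\<in>A'. finite (E' x)" unfolding A'_def E'_def using finE by auto
      moreover have "\<forall>S\<subseteq>A'. card S \<le> card (\<Union> (E' ` S))"
      proof (intro allI impI)
        fix S assume S: "S \<subseteq> A'"
        show "card S \<le> card (\<Union> (E' ` S))"
        proof (cases "S = {}")
          case True then show ?thesis by simp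
        next
          case False
          have "S \<subseteq> A" "S \<noteq> A" using S a unfolding A'_def by auto
          then have lt: "card S < card (\<Union> (E ` S))" using True False by blast
          have eq: "\<Union> (E' ` S) = \<Union> (E ` S) - {b}" unfolding E'_def by auto
          have "card (\<Union> (E ` S)) - 1 \<le> card (\<Union> (E ` S) - {b})"
            using finU[OF \<open>S \<subseteq> A\<close>] by (simp add: card_Diff_singleton_if)
          then show ?thesis using lt unfolding eq by linarith
        qed
      qed
      ultimately obtain f' where f': "inj_on f' A'" "\<forall>x\<in>A'. f' x \<in> E' x"
        using less.IH by blast
      define f where "f = f'(a := b)"
      have "inj_on f A"
      proof (rule inj_onI)
        fix x y assume xy: "x \<in> A" "y \<in> A" "f x = f y"
        show "x = y"
        proof (cases "x = a"; cases "y = a")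
          assume "x = a" "y \<noteq> a"
          then have "f' y \<in> E' y" using f'(2) xy unfolding A'_def by auto
          then show ?thesis using xy \<open>x = a\<close> \<open>y \<noteq> a\<close> unfolding f_def E'_def by auto
        next
          assume "x \<noteq> a" "y = a"
          then have "f' x \<in> E' x" using f'(2) xy unfolding A'_def by auto
          then show ?thesis using xy \<open>x \<noteq> a\<close> \<open>y = a\<close> unfolding f_def E'_def by auto
        next
          assume "x \<noteq> a" "y \<noteq> a"
          then show ?thesis using xy f'(1) unfolding f_def A'_def inj_on_def by auto
        qed simp
      qed
      moreover have "\<forall>x\<in>A. f x \<in> E x"
        using f'(2) b unfolding f_def A'_def E'_def by auto
      ultimately show ?thesis by blast
    next
      case False
      then obtain S where S0: "S \<subseteq> A \<and> S \<noteq> {} \<and> S \<noteq> A \<and> \<not> card S < card (\<Union> (E ` S))" by blast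
      then have S: "S \<subseteq> A" "S \<noteq> {}" "S \<noteq> A" "card (\<Union> (E ` S)) \<le> card S" by auto
      define T where "T = \<Union> (E ` S)"
      have "card S \<le> card T" using H S(1) unfolding T_def by blast
      then have cT: "card T = card S" using S(4) unfolding T_def by linarith
      have finS: "finite S" using S fin finite_subset by blast
      have "S \<subset> A" using S(1,3) by blast
      then have cS: "card S < k" using fin ck psubset_card_mono by blast
      obtain f1 where f1: "inj_on f1 S" "\<forall>x\<in>S. f1 x \<in> E x"
      proof -
        have "\<forall>a\<in>S. finite (E a)" using finE S(1) by blast
        moreover have "\<forall>S'\<subseteq>S. card S' \<le> card (\<Union> (E ` S'))" using H S(1) by blast
        ultimately show ?thesis using less.IH[OF cS finS refl] that by blast
      qed
      define A2 where "A2 = A - S"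
      define E2 where "E2 x = E x - T" for x
      have "card S > 0" using finS S(2) card_gt_0_iff by blast
      moreover have "card A2 = card A - card S" unfolding A2_def using S(1) fin by (simp add: card_Diff_subset finS)
      moreover have "card S \<le> card A" using S(1) fin card_mono by blast
      ultimately have cA2: "card A2 < k" using ck by linarith
      have finA2: "finite A2" unfolding A2_def using fin by simp
      have finE2: "\<forall>x\<in>A2. finite (E2 x)" unfolding A2_def E2_def using finE by auto
      have H2: "\<forall>S'\<subseteq>A2. card S' \<le> card (\<Union> (E2 ` S'))"
      proof (intro allI impI)
        fix S' assume S': "S' \<subseteq> A2"
        have disj: "S' \<inter> S = {}" using S' unfolding A2_def by auto
        have sub: "S' \<union> S \<subseteq> A" using S' S unfolding A2_def by auto
        have finS': "finite S'" using S' finA2 finite_subset by blast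
        have "card S' + card S = card (S' \<union> S)" using disj finS' finS by (simp add: card_Un_disjoint)
        also have "\<dots> \<le> card (\<Union> (E ` (S' \<union> S)))" using H sub by blast
        also have "\<dots> \<le> card (\<Union> (E2 ` S') \<union> T)"
        proof (rule card_mono)
          show "finite (\<Union> (E2 ` S') \<union> T)"
            using finU[OF sub] unfolding E2_def T_def by (rule finite_subset[rotated]) auto
          show "\<Union> (E ` (S' \<union> S)) \<subseteq> \<Union> (E2 ` S') \<union> T" unfolding E2_def T_def by auto
        qed
        also have "\<dots> \<le> card (\<Union> (E2 ` S')) + card T" by (rule card_Un_le)
        finally show "card S' \<le> card (\<Union> (E2 ` S'))" using cT by linarith
      qed
      obtain f2 where f2: "inj_on f2 A2" "\<forall>x\<in>A2. f2 x \<in> E2 x"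
        using less.IH[OF cA2 finA2 refl finE2 H2] by blast
      define f where "f x = (if x \<in> S then f1 x else f2 x)" for x
      have "inj_on f A"
      proof (rule inj_onI)
        fix x y assume xy: "x \<in> A" "y \<in> A" "f x = f y"
        show "x = y"
        proof (cases "x \<in> S"; cases "y \<in> S")
          assume "x \<in> S" "y \<in> S" then show ?thesis using xy f1(1) unfolding f_def inj_on_def by auto
        next
          assume "x \<in> S" "y \<notin> S"
          then have "f1 x \<in> T" "f2 y \<notin> T" using f1(2) f2(2) xy unfolding T_def A2_def E2_def by auto
          then show ?thesis using xy \<open>x \<in> S\<close> \<open>y \<notin> S\<close> unfolding f_def by auto
        next
          assume "x \<notin> S" "y \<in> S"
          then have "f1 y \<in> T" "f2 x \<notin> T" using f1(2) f2(2) xy unfolding T_def A2_def E2_def by auto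
          then show ?thesis using xy \<open>x \<notin> S\<close> \<open>y \<in> S\<close> unfolding f_def by auto
        next
          assume "x \<notin> S" "y \<notin> S" then show ?thesis using xy f2(1) unfolding f_def inj_on_def A2_def by auto
        qed
      qed
      moreover have "\<forall>x\<in>A. f x \<in> E x"
        using f1(2) f2(2) unfolding f_def A2_def E2_def by auto
      ultimately show ?thesis by blast
    qed
  qed
qed

lemma hall:
  fixes E :: "'a \<Rightarrow> 'b set"
  assumes "finite A" "\<forall>a\<in>A. finite (E a)" "\<forall>S\<subseteq>A. card S \<le> card (\<Union> (E ` S))"
  shows "\<exists>f. inj_on f A \<and> (\<forall>a\<in>A. f a \<in> E a)"
  using hall_aux[OF assms(1) refl assms(2,3)] .


definition fu :: "real set \<Rightarrow> bool" where
  "fu S \<longleftrightarrow> (\<exists>F. finite F \<and> (\<forall>I\<in>F. is_interval I) \<and> S = \<Union>F)"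

lemma fui_iff: "finite_union_intervals X \<longleftrightarrow> X \<subseteq> {0..1} \<and> fu X"
  unfolding finite_union_intervals_def fu_def by simp

lemma fu_empty: "fu {}" unfolding fu_def by (rule exI[of _ "{}"]) simp

lemma fu_interval: "is_interval I \<Longrightarrow> fu I" unfolding fu_def by (rule exI[of _ "{I}"]) simp

lemma fu_Un: assumes "fu A" "fu B" shows "fu (A \<union> B)"
proof -
  obtain F G where "finite F" "\<forall>I\<in>F. is_interval I" "A = \<Union>F" "finite G" "\<forall>I\<in>G. is_interval I" "B = \<Union>G"
    using assms unfolding fu_def by blast
  then show ?thesis unfolding fu_def by (intro exI[of _ "F \<union> G"]) auto
qed

lemma fu_Int: assumes "fu A" "fu B" shows "fu (A \<inter> B)"
proof -
  obtain F G where F: "finite F" "\<forall>I\<in>F. is_interval I" "A = \<Union>F" and G: "finite G" "\<forall>I\<in>G. is_interval I" "B = \<Union>G"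
    using assms unfolding fu_def by blast
  define H where "H = (\<lambda>(I, J). I \<inter> J) ` (F \<times> G)"
  have "finite H" unfolding H_def using F G by simp
  moreover have "\<forall>K\<in>H. is_interval K" unfolding H_def using F G by (auto intro: is_interval_Int)
  moreover have "A \<inter> B = \<Union>H" unfolding H_def F(3) G(3) by auto
  ultimately show ?thesis unfolding fu_def by blast
qed

lemma is_interval_down: "is_interval {x::real. x \<in> {0..1} \<and> (\<forall>y\<in>I. x < y)}"
  unfolding is_interval_1 by auto

lemma is_interval_up: "is_interval {x::real. x \<in> {0..1} \<and> (\<forall>y\<in>I. y < x)}"
  unfolding is_interval_1 by auto

lemma fu_compl_interval: assumes "is_interval I" shows "fu ({0..1} - I)"
proof -
  have "{0..1} - I = {x::real. x \<in> {0..1} \<and> (\<forall>y\<in>I. x < y)} \<union> {x::real. x \<in> {0..1} \<and> (\<forall>y\<in>I. y < x)}"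
  proof (intro set_eqI iffI)
    fix x assume x: "x \<in> {0..1} - I"
    show "x \<in> {x::real. x \<in> {0..1} \<and> (\<forall>y\<in>I. x < y)} \<union> {x::real. x \<in> {0..1} \<and> (\<forall>y\<in>I. y < x)}"
    proof (rule ccontr)
      assume "\<not> ?thesis"
      then obtain a b where ab: "a \<in> I" "b \<in> I" "a \<le> x" "x \<le> b" using x by (auto simp: not_less)
      then have "x \<in> I" using assms unfolding is_interval_1 by blast
      then show False using x by simp
    qed
  qed auto
  moreover have "fu ({x::real. x \<in> {0..1} \<and> (\<forall>y\<in>I. x < y)} \<union> {x::real. x \<in> {0..1} \<and> (\<forall>y\<in>I. y < x)})"
    by (intro fu_Un fu_interval is_interval_down is_interval_up)
  ultimately show ?thesis by simp
qed

lemma fu_compl: assumes "fu S" shows "fu ({0..1} - S)"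
proof -
  obtain F where F: "finite F" "\<forall>I\<in>F. is_interval I" "S = \<Union>F" using assms unfolding fu_def by blast
  have "\<forall>I\<in>F. is_interval I \<Longrightarrow> fu ({0..1} - \<Union>F)" using F(1)
  proof (induction F rule: finite_induct)
    case empty then show ?case by (simp add: fu_interval is_interval_cc)
  next
    case (insert I F)
    have "{0..1} - \<Union>(insert I F) = ({0..1} - I) \<inter> ({0..1} - \<Union>F)" by auto
    then show ?case using insert by (simp add: fu_Int fu_compl_interval)
  qed
  then show ?thesis using F by simp
qed

lemma fu_diff: assumes "fu A" "fu B" "A \<subseteq> {0..1}" shows "fu (A - B)"
proof -
  have "A - B = A \<inter> ({0..1} - B)" using assms(3) by auto
  then show ?thesis using assms fu_Int fu_compl by simp
qed

lemma fu_borel: assumes "fu S" shows "S \<in> sets borel"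
proof -
  obtain F where F: "finite F" "\<forall>I\<in>F. is_interval I" "S = \<Union>F" using assms unfolding fu_def by blast
  then show ?thesis using real_interval_borel_measurable by auto
qed

lemma fu_sets:
  assumes "valuation M" "fu S" "S \<subseteq> {0..1}" shows "S \<in> sets M"
proof -
  have "sets M = sets (restrict_space borel {0..1})" using assms(1) unfolding valuation_def by simp
  moreover have "S \<in> sets (restrict_space borel {0..1::real})"
    using fu_borel[OF assms(2)] assms(3) by (subst sets_restrict_space_iff) auto
  ultimately show ?thesis by simp
qed


lemma valuation_prob: "valuation M \<Longrightarrow> prob_space M" unfolding valuation_def by simp

lemma valuation_space: "valuation M \<Longrightarrow> space M = {0..1}" unfolding valuation_def by simp

lemma valuation_sets: "valuation M \<Longrightarrow> sets M = sets (restrict_space borel {0..1})" unfolding valuation_def by simp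

lemma valuation_singleton: assumes "valuation M" shows "measure M {x} = 0"
proof (cases "{x} \<in> sets M")
  case False then show ?thesis by (simp add: measure_notin_sets)
next
  case True
  show ?thesis
  proof (rule ccontr)
    assume "measure M {x} \<noteq> 0"
    then have "measure M {x} > 0" using measure_nonneg[of M "{x}"] by linarith
    then obtain B where B: "B \<in> sets M" "B \<subseteq> {x}" "0 < measure M B" "measure M B < measure M {x}"
      using assms True unfolding valuation_def nonatomic_def by blast
    then have "B = {} \<or> B = {x}" by blast
    then show False using B by auto
  qed
qed

lemma fu_finite: "finite A \<Longrightarrow> fu A"
  unfolding fu_def by (rule exI[of _ "(\<lambda>y. {y}) ` A"]) (auto simp: is_interval_1)

lemma valuation_finite_null:
  assumes "valuation M" "finite A" shows "measure M A = 0"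
  using assms(2)
proof (induction A rule: finite_induct)
  case empty then show ?case by simp
next
  case (insert x A)
  interpret prob_space M using valuation_prob[OF assms(1)] .
  have "measure M (insert x A) \<le> measure M {x} + measure M A"
  proof (cases "insert x A \<in> sets M")
    case True
    have "{x} \<in> sets M \<and> A \<in> sets M \<or> insert x A \<notin> sets M"
    proof -
      have "insert x A \<subseteq> {0..1}" using True sets.sets_into_space valuation_space[OF assms(1)] by blast
      then have "fu {x}" "fu A" "{x} \<subseteq> {0..1}" "A \<subseteq> {0..1}"
        using insert(1) fu_finite by auto
      then show ?thesis using fu_sets[OF assms(1)] by blast
    qed
    then show ?thesis using True by (metis insert_is_Un measure_Un_le)
  next
    case False then show ?thesis by (simp add: measure_notin_sets)
  qed
  then show ?case using insert valuation_singleton[OF assms(1)] measure_nonneg[of M "insert x A"] by simp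
qed

lemma valuation_fu_Int:
  assumes "valuation M" "fu A" "A \<subseteq> {0..1}" "fu B"
  shows "A \<inter> B \<in> sets M"
  using fu_sets[OF assms(1) fu_Int[OF assms(2,4)]] assms(3) by blast

definition nu :: "real measure \<Rightarrow> real set \<Rightarrow> real measure" where
  "nu M R = distr (restrict_space M R) borel (\<lambda>x. x)"

lemma nu_measurable:
  assumes "valuation M" shows "(\<lambda>x. x) \<in> restrict_space M R \<rightarrow>\<^sub>M borel"
proof -
  have "(\<lambda>x::real. x) \<in> restrict_space borel {0..1} \<rightarrow>\<^sub>M borel"
    by (rule measurable_restrict_space1) simp
  moreover have "M \<rightarrow>\<^sub>M borel = restrict_space borel {0..1} \<rightarrow>\<^sub>M (borel :: real measure)"
    by (rule measurable_cong_sets[OF valuation_sets[OF assms]]) simp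
  ultimately have "(\<lambda>x::real. x) \<in> M \<rightarrow>\<^sub>M borel" by simp
  then show ?thesis by (rule measurable_restrict_space1)
qed

lemma nu_measure:
  assumes "valuation M" "fu R" "R \<subseteq> {0..1}" "A \<in> sets borel"
  shows "measure (nu M R) A = measure M (A \<inter> R)"
proof -
  have R: "R \<inter> space M \<in> sets M" using fu_sets[OF assms(1,2,3)] assms(3) valuation_space[OF assms(1)] by (simp add: Int_absorb2)
  have "measure (nu M R) A = measure (restrict_space M R) (A \<inter> space (restrict_space M R))"
    unfolding nu_def by (simp add: measure_distr[OF nu_measurable[OF assms(1)] assms(4)])
  also have "\<dots> = measure (restrict_space M R) (A \<inter> R)"
    using assms(3) valuation_space[OF assms(1)] by (simp add: space_restrict_space Int_absorb2)
  also have "\<dots> = measure M (A \<inter> R)"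
    by (rule measure_restrict_space[OF R]) auto
  finally show ?thesis .
qed

lemma nu_fbm:
  assumes "valuation M" "fu R" "R \<subseteq> {0..1}"
  shows "finite_borel_measure (nu M R)"
proof (rule finite_borel_measure.intro)
  interpret prob_space M using valuation_prob[OF assms(1)] .
  have R: "R \<inter> space M \<in> sets M" using fu_sets[OF assms(1,2,3)] assms(3) valuation_space[OF assms(1)] by (simp add: Int_absorb2)
  have "finite_measure (restrict_space M R)"
    using finite_measure_restrict_space[OF finite_measure_axioms fu_sets[OF assms(1,2,3)]] .
  then show "finite_measure (nu M R)" unfolding nu_def
    by (rule finite_measure.finite_measure_distr[OF _ nu_measurable[OF assms(1)]])
  show "finite_borel_measure_axioms (nu M R)"
    by (unfold_locales) (simp add: nu_def)
qed

definition cF :: "real measure \<Rightarrow> real set \<Rightarrow> real \<Rightarrow> real" where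
  "cF M R t = cdf (nu M R) t"

lemma cF_cont:
  assumes "valuation M" "fu R" "R \<subseteq> {0..1}"
  shows "isCont (cF M R) t"
proof -
  interpret finite_borel_measure "nu M R" by (rule nu_fbm[OF assms])
  have "measure (nu M R) {t} = measure M ({t} \<inter> R)"
    by (rule nu_measure[OF assms]) simp
  also have "\<dots> = 0"
    by (cases "t \<in> R") (auto simp: valuation_singleton[OF assms(1)])
  finally show ?thesis unfolding cF_def using isCont_cdf by simp
qed

lemma cF_diff:
  assumes "valuation M" "fu R" "R \<subseteq> {0..1}" "a \<le> b"
  shows "cF M R b - cF M R a = measure M (R \<inter> {a<..b})"
proof (cases "a = b")
  case True then show ?thesis by simp
next
  case False
  interpret finite_borel_measure "nu M R" by (rule nu_fbm[OF assms(1-3)])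
  have "cF M R b - cF M R a = measure (nu M R) {a<..b}"
    unfolding cF_def using cdf_diff_eq False assms(4) by simp
  also have "\<dots> = measure M ({a<..b} \<inter> R)" by (rule nu_measure[OF assms(1-3)]) simp
  finally show ?thesis by (simp add: Int_commute)
qed

lemma cF_mono:
  assumes "valuation M" "fu R" "R \<subseteq> {0..1}" "a \<le> b"
  shows "cF M R a \<le> cF M R b"
  using cF_diff[OF assms] measure_nonneg[of M "R \<inter> {a<..b}"] by linarith

lemma cF_0: assumes "valuation M" "fu R" "R \<subseteq> {0..1}" shows "cF M R 0 = 0"
proof -
  interpret finite_borel_measure "nu M R" by (rule nu_fbm[OF assms])
  have "cF M R 0 = measure M ({..0} \<inter> R)" unfolding cF_def cdf_def by (rule nu_measure[OF assms]) simp
  also have "{..0} \<inter> R \<subseteq> {0}" using assms(3) by auto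
  then have "{..0} \<inter> R = {} \<or> {..0} \<inter> R = {0}" by blast
  then have "measure M ({..0} \<inter> R) = 0" using valuation_singleton[OF assms(1)] by auto
  finally show ?thesis .
qed

lemma cF_1: assumes "valuation M" "fu R" "R \<subseteq> {0..1}" shows "cF M R 1 = measure M R"
proof -
  interpret finite_borel_measure "nu M R" by (rule nu_fbm[OF assms])
  have "cF M R 1 = measure M ({..1} \<inter> R)" unfolding cF_def cdf_def by (rule nu_measure[OF assms]) simp
  also have "{..1} \<inter> R = R" using assms(3) by auto
  finally show ?thesis .
qed


locale efs =
  fixes n :: nat and F :: "nat \<Rightarrow> real \<Rightarrow> real"
  assumes n1: "n \<ge> 1"
    and Fcont: "\<And>i t. i \<in> {1..n} \<Longrightarrow> isCont (F i) t"
    and Fmono: "\<And>i s t. i \<in> {1..n} \<Longrightarrow> 0 \<le> s \<Longrightarrow> s \<le> t \<Longrightarrow> t \<le> 1 \<Longrightarrow> F i s \<le> F i t"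
    and F0: "\<And>i. i \<in> {1..n} \<Longrightarrow> F i 0 = 0"
begin

fun cuts :: "(nat \<Rightarrow> real) \<Rightarrow> nat \<Rightarrow> real" where
  "cuts x 0 = 0"
| "cuts x (Suc k) = (if Suc k \<ge> n then 1 else max (cuts x k) (x k))"

declare cuts.simps(2)[simp del]

definition gap where "gap x k = cuts x (Suc k) - cuts x k"
definition fv where "fv i k x = F i (cuts x (Suc k)) - F i (cuts x k)"

fun mxr :: "nat \<Rightarrow> nat \<Rightarrow> (nat \<Rightarrow> real) \<Rightarrow> real" where
  "mxr i 0 x = fv i 0 x"
| "mxr i (Suc k) x = max (mxr i k x) (fv i (Suc k) x)"

definition Mx where "Mx i x = mxr i (n - 1) x"
definition c where "c i = F i 1"
definition h where "h e i k x = max 0 (fv i k x - (1 - e) * Mx i x)"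
definition H where "H e i x = (\<Sum>l<n. h e i l x)"
definition d where "d e i k x = (if c i > 0 then h e i k x / H e i x else gap x k)"
definition D where "D e k x = (\<Sum>i\<in>{1..n}. d e i k x)"
definition u where "u e k x = max 0 (1 - D e k x)"
definition S where "S e x = (\<Sum>k<n. u e k x)"
definition t where "t e k x = (gap x k + u e k x) / (1 + S e x)"
definition T where "T e x = (\<lambda>j. if j < n - 1 then (\<Sum>k\<le>j. t e k x) else 0)"

lemma cuts_n: "cuts x n = 1"
proof -
  have "cuts x (Suc (n - 1)) = 1" by (simp add: cuts.simps(2))
  moreover have "Suc (n - 1) = n" using n1 by simp
  ultimately show ?thesis by simp
qed

lemma cuts_cube:
  assumes "x \<in> cube (n - 1)"
  shows "k \<le> n \<Longrightarrow> 0 \<le> cuts x k \<and> cuts x k \<le> 1"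
proof (induction k)
  case 0 then show ?case by simp
next
  case (Suc k)
  show ?case
  proof (cases "Suc k \<ge> n")
    case True then show ?thesis by (simp add: cuts.simps(2))
  next
    case False
    then have "k < n - 1" by simp
    then have "0 \<le> x k" "x k \<le> 1" using assms unfolding cube_def by auto
    then show ?thesis using Suc False by (simp add: cuts.simps(2))
  qed
qed

lemma cuts_mono:
  assumes "x \<in> cube (n - 1)" "k < n"
  shows "cuts x k \<le> cuts x (Suc k)"
proof (cases "Suc k \<ge> n")
  case True then show ?thesis using cuts_cube[OF assms(1), of k] assms(2) by (simp add: cuts.simps(2))
next
  case False then show ?thesis by (simp add: cuts.simps(2))
qed

lemma gap_nonneg: "x \<in> cube (n - 1) \<Longrightarrow> k < n \<Longrightarrow> gap x k \<ge> 0"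
  using cuts_mono unfolding gap_def by simp

lemma sum_gap: "(\<Sum>k<n. gap x k) = 1"
  unfolding gap_def by (simp add: sum_lessThan_telescope cuts_n)

lemma c_nonneg: "i \<in> {1..n} \<Longrightarrow> c i \<ge> 0"
  unfolding c_def using Fmono[of i 0 1] F0[of i] by simp

lemma sum_fv: "i \<in> {1..n} \<Longrightarrow> (\<Sum>k<n. fv i k x) = c i"
  unfolding fv_def c_def using sum_lessThan_telescope[of "\<lambda>k. F i (cuts x k)" n] by (simp add: cuts_n F0)

lemma mxr_ge: "k \<le> m \<Longrightarrow> fv i k x \<le> mxr i m x"
proof (induction m)
  case 0 then show ?case by simp
next
  case (Suc m) then show ?case by (cases "k = Suc m") (auto simp: le_Suc_eq max.coboundedI1)
qed

lemma mxr_attained: "\<exists>k\<le>m. mxr i m x = fv i k x"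
proof (induction m)
  case 0 then show ?case by simp
next
  case (Suc m)
  then obtain k where "k \<le> m" "mxr i m x = fv i k x" by blast
  then show ?case by (cases "mxr i m x \<le> fv i (Suc m) x") (auto simp: max_def intro: le_SucI)
qed

lemma Mx_ge: "k < n \<Longrightarrow> fv i k x \<le> Mx i x"
  unfolding Mx_def by (rule mxr_ge) simp

lemma Mx_attained: "\<exists>k<n. Mx i x = fv i k x"
proof -
  obtain k where "k \<le> n - 1" "Mx i x = fv i k x" unfolding Mx_def using mxr_attained by blast
  moreover have "k < n" using \<open>k \<le> n - 1\<close> n1 by linarith
  ultimately show ?thesis by blast
qed

lemma Mx_lower: assumes "i \<in> {1..n}" shows "c i \<le> real n * Mx i x"
proof -
  have "c i = (\<Sum>k<n. fv i k x)" using sum_fv[OF assms] by simp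
  also have "\<dots> \<le> (\<Sum>k<n. Mx i x)" by (rule sum_mono) (simp add: Mx_ge)
  also have "\<dots> = real n * Mx i x" by simp
  finally show ?thesis .
qed

lemma Mx_pos: "i \<in> {1..n} \<Longrightarrow> c i > 0 \<Longrightarrow> Mx i x > 0"
proof (rule ccontr)
  assume a: "i \<in> {1..n}" "c i > 0" "\<not> Mx i x > 0"
  then have "real n * Mx i x \<le> 0" by (simp add: mult_nonneg_nonpos)
  then show False using Mx_lower[OF a(1), of x] a(2) by linarith
qed

lemma h_nonneg: "h e i k x \<ge> 0" unfolding h_def by simp

lemma H_lower: assumes "0 \<le> e" shows "e * Mx i x \<le> H e i x"
proof -
  obtain k where k: "k < n" "Mx i x = fv i k x" using Mx_attained by blast
  have "e * Mx i x \<le> h e i k x" unfolding h_def using k(2) by (simp add: algebra_simps)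
  also have "\<dots> \<le> H e i x" unfolding H_def
    by (rule member_le_sum) (use k(1) h_nonneg in auto)
  finally show ?thesis .
qed

lemma H_pos: "0 < e \<Longrightarrow> i \<in> {1..n} \<Longrightarrow> c i > 0 \<Longrightarrow> H e i x > 0"
proof -
  assume a: "0 < e" "i \<in> {1..n}" "c i > 0"
  have "0 < e * Mx i x" using a Mx_pos by simp
  then show "H e i x > 0" using H_lower[of e i x] a(1) by linarith
qed

lemma cont_cuts: "continuous_on UNIV (\<lambda>x. cuts x k)"
proof (induction k)
  case 0 then show ?case by simp
next
  case (Suc k)
  show ?case
  proof (cases "Suc k \<ge> n")
    case True then show ?thesis by (simp add: cuts.simps(2))
  next
    case False
    have "continuous_on UNIV (\<lambda>x. max (cuts x k) (x k))"
      by (rule continuous_on_max[OF Suc continuous_on_product_coordinates])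
    then show ?thesis using False by (simp add: cuts.simps(2))
  qed
qed

lemma contF: "i \<in> {1..n} \<Longrightarrow> continuous_on UNIV (F i)"
  by (rule continuous_at_imp_continuous_on) (simp add: Fcont)

lemma cont_Fcuts: "i \<in> {1..n} \<Longrightarrow> continuous_on UNIV (\<lambda>x. F i (cuts x k))"
  by (rule continuous_on_compose2[OF contF cont_cuts]) auto

lemma cont_fv: "i \<in> {1..n} \<Longrightarrow> continuous_on UNIV (fv i k)"
  unfolding fv_def by (intro continuous_on_diff cont_Fcuts)

lemma cont_mxr: "i \<in> {1..n} \<Longrightarrow> continuous_on UNIV (mxr i m)"
proof (induction m)
  case 0 then show ?case using cont_fv by simp
next
  case (Suc m)
  have "continuous_on UNIV (\<lambda>x. max (mxr i m x) (fv i (Suc m) x))"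
    by (rule continuous_on_max[OF Suc.IH[OF Suc.prems] cont_fv[OF Suc.prems]])
  then show ?case by simp
qed

lemma cont_Mx: "i \<in> {1..n} \<Longrightarrow> continuous_on UNIV (Mx i)"
  unfolding Mx_def[abs_def] using cont_mxr by simp

lemma cont_h: "i \<in> {1..n} \<Longrightarrow> continuous_on UNIV (h e i k)"
  unfolding h_def[abs_def]
  by (intro continuous_on_max continuous_on_const continuous_on_diff continuous_on_mult cont_fv cont_Mx)

lemma cont_H: "i \<in> {1..n} \<Longrightarrow> continuous_on UNIV (H e i)"
  unfolding H_def[abs_def] by (intro continuous_on_sum cont_h)

lemma cont_gap: "continuous_on UNIV (\<lambda>x. gap x k)"
  unfolding gap_def by (intro continuous_on_diff cont_cuts)

lemma cont_d: assumes "0 < e" "i \<in> {1..n}" shows "continuous_on UNIV (d e i k)"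
proof (cases "c i > 0")
  case True
  have "continuous_on UNIV (\<lambda>x. h e i k x / H e i x)"
    by (rule continuous_on_divide[OF cont_h[OF assms(2)] cont_H[OF assms(2)]])
       (use H_pos[OF assms(1,2) True] in \<open>metis less_irrefl\<close>)
  then show ?thesis using True unfolding d_def[abs_def] by simp
next
  case False
  then show ?thesis unfolding d_def[abs_def] using cont_gap by simp
qed

lemma cont_D: "0 < e \<Longrightarrow> continuous_on UNIV (D e k)"
  unfolding D_def[abs_def] by (intro continuous_on_sum cont_d) auto

lemma cont_u: "0 < e \<Longrightarrow> continuous_on UNIV (u e k)"
  unfolding u_def[abs_def] by (intro continuous_on_max continuous_on_const continuous_on_diff cont_D)

lemma u_nonneg: "u e k x \<ge> 0" unfolding u_def by simp

lemma S_nonneg: "S e x \<ge> 0" unfolding S_def by (rule sum_nonneg) (simp add: u_nonneg)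

lemma cont_S: "0 < e \<Longrightarrow> continuous_on UNIV (S e)"
  unfolding S_def[abs_def] by (intro continuous_on_sum cont_u)

lemma cont_t: "0 < e \<Longrightarrow> continuous_on UNIV (t e k)"
  unfolding t_def[abs_def]
proof (rule continuous_on_divide)
  assume e: "0 < e"
  show "continuous_on UNIV (\<lambda>x. gap x k + u e k x)" by (intro continuous_on_add cont_gap cont_u e)
  show "continuous_on UNIV (\<lambda>x. 1 + S e x)" by (intro continuous_on_add continuous_on_const cont_S e)
  show "\<forall>x\<in>UNIV. 1 + S e x \<noteq> 0" using S_nonneg by (metis add_pos_nonneg less_numeral_extra(1) less_numeral_extra(3))
qed

lemma cont_T: assumes "0 < e" shows "continuous_on UNIV (T e)"
  unfolding T_def
proof (rule continuous_on_coordinatewise_then_product)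
  fix j
  show "continuous_on UNIV (\<lambda>x. if j < n - 1 then \<Sum>k\<le>j. t e k x else 0)"
    by (cases "j < n - 1") (auto intro!: continuous_on_sum cont_t assms)
qed

lemma H_nonneg: "H e i x \<ge> 0" unfolding H_def by (rule sum_nonneg) (simp add: h_nonneg)

lemma d_nonneg: "x \<in> cube (n - 1) \<Longrightarrow> k < n \<Longrightarrow> d e i k x \<ge> 0"
  unfolding d_def using gap_nonneg h_nonneg H_nonneg by simp

lemma row_sum: assumes "0 < e" "i \<in> {1..n}" shows "(\<Sum>k<n. d e i k x) = 1"
proof (cases "c i > 0")
  case True
  have "(\<Sum>k<n. d e i k x) = (\<Sum>k<n. h e i k x) / H e i x"
    unfolding d_def using True by (simp add: sum_divide_distrib)
  also have "\<dots> = 1" unfolding H_def[symmetric] using H_pos[OF assms True, of x] by simp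
  finally show ?thesis .
next
  case False then show ?thesis unfolding d_def using sum_gap by simp
qed

lemma sum_D: assumes "0 < e" shows "(\<Sum>k<n. D e k x) = real n"
proof -
  have "(\<Sum>k<n. D e k x) = (\<Sum>i\<in>{1..n}. \<Sum>k<n. d e i k x)"
    unfolding D_def by (rule sum.swap)
  also have "\<dots> = (\<Sum>i\<in>{1..n}. 1)" by (rule sum.cong) (simp_all add: row_sum assms)
  finally show ?thesis by simp
qed

lemma t_nonneg: "x \<in> cube (n - 1) \<Longrightarrow> k < n \<Longrightarrow> t e k x \<ge> 0"
  unfolding t_def using gap_nonneg u_nonneg S_nonneg by (simp add: add_nonneg_nonneg)

lemma sum_t: "(\<Sum>k<n. t e k x) = 1"
proof -
  have "(\<Sum>k<n. t e k x) = (\<Sum>k<n. gap x k + u e k x) / (1 + S e x)"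
    unfolding t_def by (simp add: sum_divide_distrib)
  also have "\<dots> = (1 + S e x) / (1 + S e x)" by (simp add: sum.distrib sum_gap S_def)
  also have "\<dots> = 1" using S_nonneg[of e x] by simp
  finally show ?thesis .
qed

lemma T_cube: assumes "x \<in> cube (n - 1)" shows "T e x \<in> cube (n - 1)"
  unfolding cube_def
proof (intro CollectI conjI allI impI)
  fix j assume j: "j < n - 1"
  have "(\<Sum>k\<le>j. t e k x) \<ge> 0" by (rule sum_nonneg) (use t_nonneg[OF assms] j in auto)
  moreover have "(\<Sum>k\<le>j. t e k x) \<le> (\<Sum>k<n. t e k x)"
    by (rule sum_mono2) (use t_nonneg[OF assms] j in auto)
  ultimately show "0 \<le> T e x j" "T e x j \<le> 1" using j sum_t unfolding T_def by auto
next
  fix j :: nat assume "n - 1 \<le> j" then show "T e x j = 0" unfolding T_def by simp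
qed

lemma fix_cuts:
  assumes x: "x \<in> cube (n - 1)" and fp: "T e x = x"
  shows "k \<le> n - 1 \<Longrightarrow> cuts x k = (\<Sum>l<k. t e l x)"
proof (induction k)
  case 0 then show ?case by simp
next
  case (Suc k)
  then have k: "k < n - 1" by simp
  have xk: "x k = (\<Sum>l\<le>k. t e l x)"
  proof -
    have "x k = T e x k" using fp by simp
    then show ?thesis unfolding T_def using k by simp
  qed
  have "t e k x \<ge> 0" using t_nonneg[OF x] k by simp
  then have "max (\<Sum>l<k. t e l x) (\<Sum>l\<le>k. t e l x) = (\<Sum>l<Suc k. t e l x)"
    by (simp add: lessThan_Suc_atMost[symmetric])
  then show ?case using Suc k xk by (simp add: cuts.simps(2))
qed

lemma fix_gap:
  assumes x: "x \<in> cube (n - 1)" and fp: "T e x = x" and k: "k < n"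
  shows "gap x k = t e k x"
proof (cases "Suc k \<le> n - 1")
  case True
  then show ?thesis unfolding gap_def using fix_cuts[OF x fp] by simp
next
  case False
  then have kn: "k = n - 1" using k by simp
  have "cuts x k = (\<Sum>l<k. t e l x)" using fix_cuts[OF x fp] kn by simp
  moreover have "cuts x (Suc k) = 1" using kn n1 cuts_n by simp
  moreover have "(\<Sum>l<Suc k. t e l x) = 1" using kn n1 sum_t by simp
  ultimately show ?thesis unfolding gap_def by simp
qed

lemma zero_gap_D:
  assumes e: "0 < e" "e \<le> 1" and x: "x \<in> cube (n - 1)" and k: "k < n" and g: "gap x k = 0"
  shows "D e k x = 0"
  unfolding D_def
proof (rule sum.neutral, intro ballI)
  fix i assume i: "i \<in> {1..n}"
  show "d e i k x = 0"
  proof (cases "c i > 0")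
    case True
    have "fv i k x = 0" using g unfolding gap_def fv_def by simp
    moreover have "(1 - e) * Mx i x \<ge> 0" using Mx_pos[OF i True, of x] e by simp
    ultimately have "h e i k x = 0" unfolding h_def by simp
    then show ?thesis unfolding d_def using True by simp
  next
    case False then show ?thesis unfolding d_def using g by simp
  qed
qed

lemma fix_D:
  assumes e: "0 < e" "e \<le> 1" and x: "x \<in> cube (n - 1)" and fp: "T e x = x"
  shows "\<forall>k<n. D e k x = 1"
proof -
  have eq: "gap x k * S e x = u e k x" if "k < n" for k
  proof -
    have "gap x k = (gap x k + u e k x) / (1 + S e x)" using fix_gap[OF x fp that] unfolding t_def .
    then have "gap x k * (1 + S e x) = gap x k + u e k x"
      using S_nonneg[of e x] by (simp add: field_simps)
    then show ?thesis by (simp add: algebra_simps)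
  qed
  have S0: "S e x = 0"
  proof (rule ccontr)
    assume "S e x \<noteq> 0"
    then have Spos: "S e x > 0" using S_nonneg[of e x] by simp
    have Dlt: "D e k x < 1" if k: "k < n" for k
    proof (cases "gap x k = 0")
      case True
      then have "u e k x = 0" using eq[OF k] by simp
      moreover have "D e k x = 0" by (rule zero_gap_D[OF e x k True])
      ultimately show ?thesis unfolding u_def by simp
    next
      case False
      then have "gap x k > 0" using gap_nonneg[OF x k] by simp
      then have "u e k x > 0" using eq[OF k] Spos by (metis mult_pos_pos)
      then show ?thesis unfolding u_def by simp
    qed
    have "(\<Sum>k<n. D e k x) < (\<Sum>k<n. 1)"
    proof (rule sum_strict_mono)
      have "0 \<in> {..<n}" using n1 by simp
      then show "{..<n} \<noteq> {}" by blast
    qed (use Dlt in auto)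
    then show False using sum_D[OF e(1), of x] by simp
  qed
  have Dge: "D e k x \<ge> 1" if k: "k < n" for k
  proof -
    have "u e k x \<le> S e x" unfolding S_def by (rule member_le_sum) (use k u_nonneg in auto)
    then have "u e k x = 0" using S0 u_nonneg[of e k x] by simp
    then show ?thesis unfolding u_def by simp
  qed
  show ?thesis
  proof (intro allI impI)
    fix k assume k: "k < n"
    show "D e k x = 1"
    proof (rule ccontr)
      assume "D e k x \<noteq> 1"
      then have gt: "D e k x > 1" using Dge[OF k] by simp
      have "(\<Sum>l<n. 1) < (\<Sum>l<n. D e l x)"
        by (rule sum_strict_mono_ex1) (use Dge k gt in auto)
      then show False using sum_D[OF e(1), of x] by simp
    qed
  qed
qed

lemma match:
  assumes e: "0 < e" and x: "x \<in> cube (n - 1)" and Dk: "\<forall>k<n. D e k x = 1"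
  shows "\<exists>\<pi>. inj_on \<pi> {1..n} \<and> (\<forall>i\<in>{1..n}. \<pi> i < n \<and> d e i (\<pi> i) x > 0)"
proof -
  define E where "E i = {k. k < n \<and> d e i k x > 0}" for i
  have "\<exists>\<pi>. inj_on \<pi> {1..n} \<and> (\<forall>i\<in>{1..n}. \<pi> i \<in> E i)"
  proof (rule hall)
    show "finite {1..n}" by simp
    show "\<forall>i\<in>{1..n}. finite (E i)" unfolding E_def by simp
    show "\<forall>I\<subseteq>{1..n}. card I \<le> card (\<Union> (E ` I))"
    proof (intro allI impI)
      fix I assume I: "I \<subseteq> {1..n}"
      define N where "N = \<Union> (E ` I)"
      have Nsub: "N \<subseteq> {..<n}" unfolding N_def E_def by auto
      have finI: "finite I" using I finite_subset by blast
      have finN: "finite N" using Nsub finite_subset by blast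
      have "real (card I) = (\<Sum>i\<in>I. 1)" by simp
      also have "\<dots> = (\<Sum>i\<in>I. \<Sum>k<n. d e i k x)"
        by (rule sum.cong) (use I row_sum[OF e] in auto)
      also have "\<dots> = (\<Sum>i\<in>I. \<Sum>k\<in>N. d e i k x)"
      proof (rule sum.cong[OF refl])
        fix i assume i: "i \<in> I"
        show "(\<Sum>k<n. d e i k x) = (\<Sum>k\<in>N. d e i k x)"
        proof (rule sum.mono_neutral_right)
          show "finite {..<n}" by simp
          show "N \<subseteq> {..<n}" by (rule Nsub)
          show "\<forall>k\<in>{..<n} - N. d e i k x = 0"
          proof
            fix k assume k: "k \<in> {..<n} - N"
            then have "\<not> d e i k x > 0" using i unfolding N_def E_def by auto
            then show "d e i k x = 0" using d_nonneg[OF x, of k e i] k by simp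
          qed
        qed
      qed
      also have "\<dots> = (\<Sum>k\<in>N. \<Sum>i\<in>I. d e i k x)" by (rule sum.swap)
      also have "\<dots> \<le> (\<Sum>k\<in>N. \<Sum>i\<in>{1..n}. d e i k x)"
      proof (rule sum_mono)
        fix k assume k: "k \<in> N"
        show "(\<Sum>i\<in>I. d e i k x) \<le> (\<Sum>i\<in>{1..n}. d e i k x)"
          by (rule sum_mono2) (use I d_nonneg[OF x] k Nsub in auto)
      qed
      also have "\<dots> = (\<Sum>k\<in>N. 1)"
        by (rule sum.cong[OF refl]) (use Dk Nsub in \<open>auto simp: D_def\<close>)
      also have "\<dots> = real (card N)" by simp
      finally show "card I \<le> card (\<Union> (E ` I))" unfolding N_def by simp
    qed
  qed
  then show ?thesis unfolding E_def by blast
qed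

lemma F_zero: assumes "i \<in> {1..n}" "c i = 0" "0 \<le> s" "s \<le> 1" shows "F i s = 0"
proof -
  have "F i 0 \<le> F i s" by (rule Fmono) (use assms in auto)
  moreover have "F i s \<le> F i 1" by (rule Fmono) (use assms in auto)
  ultimately show ?thesis using F0[OF assms(1)] assms(2) unfolding c_def by simp
qed

lemma fv_zero: assumes "x \<in> cube (n - 1)" "i \<in> {1..n}" "c i = 0" "k < n" shows "fv i k x = 0"
proof -
  have "F i (cuts x (Suc k)) = 0" using F_zero[OF assms(2,3)] cuts_cube[OF assms(1), of "Suc k"] assms(4) by simp
  moreover have "F i (cuts x k) = 0" using F_zero[OF assms(2,3)] cuts_cube[OF assms(1), of k] assms(4) by simp
  ultimately show ?thesis unfolding fv_def by simp
qed

lemma Mx_zero: assumes "x \<in> cube (n - 1)" "i \<in> {1..n}" "c i = 0" shows "Mx i x = 0"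
  using Mx_attained[of i x] fv_zero[OF assms] by auto

lemma eps_step:
  assumes e: "0 < e" "e \<le> 1"
  shows "\<exists>x\<in>cube (n - 1). \<exists>\<pi>. inj_on \<pi> {1..n} \<and> (\<forall>i\<in>{1..n}. \<pi> i < n \<and> (1 - e) * Mx i x \<le> fv i (\<pi> i) x)"
proof -
  obtain x where x: "x \<in> cube (n - 1)" "T e x = x"
    using brouwer_cube_fun[OF continuous_on_subset[OF cont_T[OF e(1)]] T_cube] by blast
  obtain \<pi> where \<pi>: "inj_on \<pi> {1..n}" "\<forall>i\<in>{1..n}. \<pi> i < n \<and> d e i (\<pi> i) x > 0"
    using match[OF e(1) x(1) fix_D[OF e x]] by blast
  have "(1 - e) * Mx i x \<le> fv i (\<pi> i) x" if i: "i \<in> {1..n}" for i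
  proof (cases "c i > 0")
    case True
    have "d e i (\<pi> i) x > 0" using \<pi>(2) i by blast
    then have "h e i (\<pi> i) x / H e i x > 0" using True unfolding d_def by simp
    then have "h e i (\<pi> i) x > 0" using H_pos[OF e(1) i True, of x] by (simp add: zero_less_divide_iff)
    then show ?thesis unfolding h_def by simp
  next
    case False
    then have "c i = 0" using c_nonneg[OF i] by simp
    then show ?thesis using fv_zero[OF x(1) i] Mx_zero[OF x(1) i] \<pi>(2) i by simp
  qed
  then show ?thesis using x(1) \<pi> by blast
qed

lemma exact_ef:
  "\<exists>x\<in>cube (n - 1). \<exists>\<pi>. inj_on \<pi> {1..n} \<and> (\<forall>i\<in>{1..n}. \<pi> i < n \<and> Mx i x \<le> fv i (\<pi> i) x)"
proof -
  define e where "e m = inverse (real (Suc m))" for m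
  have e: "0 < e m" "e m \<le> 1" for m unfolding e_def by (auto simp: inverse_le_1_iff)
  have "\<forall>m. \<exists>x\<in>cube (n - 1). \<exists>\<pi>. inj_on \<pi> {1..n} \<and> (\<forall>i\<in>{1..n}. \<pi> i < n \<and> (1 - e m) * Mx i x \<le> fv i (\<pi> i) x)"
    using eps_step[OF e] by blast
  then obtain X P where XP: "\<And>m. X m \<in> cube (n - 1)" "\<And>m. inj_on (P m) {1..n}"
    "\<And>m i. i \<in> {1..n} \<Longrightarrow> P m i < n" "\<And>m i. i \<in> {1..n} \<Longrightarrow> (1 - e m) * Mx i (X m) \<le> fv i (P m i) (X m)"
    by metis
  define f where "f m = restrict (P m) {1..n}" for m
  have "f ` UNIV \<subseteq> PiE {1..n} (\<lambda>_. {..<n})" unfolding f_def using XP(3) by auto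
  moreover have "finite (PiE {1..n} (\<lambda>_. {..<n}))" by (rule finite_PiE) auto
  ultimately have "finite (f ` UNIV)" using finite_subset by blast
  then obtain m0 where "infinite {m \<in> UNIV. f m = f m0}"
    using pigeonhole_infinite[of UNIV f] by auto
  then have infA: "infinite {m. f m = f m0}" by simp
  define A where "A = {m. f m = f m0}"
  define \<pi> where "\<pi> = P m0"
  have Pm: "P m i = \<pi> i" if "m \<in> A" "i \<in> {1..n}" for m i
  proof -
    have "restrict (P m) {1..n} i = restrict (P m0) {1..n} i" using that unfolding A_def f_def by simp
    then show ?thesis using that(2) unfolding \<pi>_def by simp
  qed
  define r where "r = enumerate A"
  have infA': "infinite A" unfolding A_def by (rule infA)
  have r: "strict_mono r" "\<And>j. r j \<in> A"
    unfolding r_def using strict_mono_enumerate[OF infA'] enumerate_in_set[OF infA'] by auto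
  have "seq_compact (cube (n - 1))" by (rule compact_imp_seq_compact[OF compact_cube])
  then obtain l s where ls: "l \<in> cube (n - 1)" "strict_mono s" "((\<lambda>j. X (r j)) \<circ> s) \<longlonglongrightarrow> l"
    using seq_compactE[of "cube (n - 1)" "\<lambda>j. X (r j)"] XP(1) by metis
  define q where "q = r \<circ> s"
  have q: "strict_mono q" "\<And>j. q j \<in> A" unfolding q_def using r ls(2) by (auto intro: strict_mono_o)
  have Xq: "(\<lambda>j. X (q j)) \<longlonglongrightarrow> l" using ls(3) unfolding q_def o_def by simp
  have eq0: "(\<lambda>j. e (q j)) \<longlonglongrightarrow> 0"
  proof (rule tendsto_sandwich[OF _ _ tendsto_const LIMSEQ_inverse_real_of_nat])
    show "\<forall>\<^sub>F j in sequentially. 0 \<le> e (q j)" using e by (simp add: less_imp_le)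
    show "\<forall>\<^sub>F j in sequentially. e (q j) \<le> inverse (real (Suc j))"
    proof (rule always_eventually, rule allI)
      fix j
      have "j \<le> q j" using seq_suble[OF q(1)] .
      then show "e (q j) \<le> inverse (real (Suc j))" unfolding e_def by (simp add: le_imp_inverse_le)
    qed
  qed
  have lim: "Mx i l \<le> fv i (\<pi> i) l" if i: "i \<in> {1..n}" for i
  proof (rule LIMSEQ_le)
    have cM: "isCont (Mx i) l" using cont_Mx[OF i] by (simp add: continuous_on_eq_continuous_at)
    have cf: "isCont (fv i (\<pi> i)) l" using cont_fv[OF i] by (simp add: continuous_on_eq_continuous_at)
    have "(\<lambda>j. (1 - e (q j)) * Mx i (X (q j))) \<longlonglongrightarrow> (1 - 0) * Mx i l"
      by (intro tendsto_mult tendsto_diff tendsto_const eq0 isCont_tendsto_compose[OF cM Xq])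
    then show "(\<lambda>j. (1 - e (q j)) * Mx i (X (q j))) \<longlonglongrightarrow> Mx i l" by simp
    show "(\<lambda>j. fv i (\<pi> i) (X (q j))) \<longlonglongrightarrow> fv i (\<pi> i) l"
      by (rule isCont_tendsto_compose[OF cf Xq])
    show "\<exists>N. \<forall>j\<ge>N. (1 - e (q j)) * Mx i (X (q j)) \<le> fv i (\<pi> i) (X (q j))"
      using XP(4)[OF i] Pm[OF q(2) i] by metis
  qed
  have "inj_on \<pi> {1..n}" unfolding \<pi>_def by (rule XP(2))
  moreover have "\<forall>i\<in>{1..n}. \<pi> i < n" unfolding \<pi>_def using XP(3) by blast
  ultimately show ?thesis using ls(1) lim by blast
qed

lemma ef_cuts:
  "\<exists>a \<pi>. a 0 = 0 \<and> a n = 1 \<and> (\<forall>k<n. a k \<le> a (Suc k)) \<and> (\<forall>k\<le>n. 0 \<le> a k \<and> a k \<le> 1) \<and>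
     bij_betw \<pi> {1..n} {..<n} \<and>
     (\<forall>i\<in>{1..n}. \<forall>k<n. F i (a (Suc k)) - F i (a k) \<le> F i (a (Suc (\<pi> i))) - F i (a (\<pi> i)))"
proof -
  obtain x \<pi> where x: "x \<in> cube (n - 1)" "inj_on \<pi> {1..n}" "\<forall>i\<in>{1..n}. \<pi> i < n \<and> Mx i x \<le> fv i (\<pi> i) x"
    using exact_ef by blast
  have img: "\<pi> ` {1..n} = {..<n}"
  proof (rule card_subset_eq)
    show "finite {..<n}" by simp
    show "\<pi> ` {1..n} \<subseteq> {..<n}" using x(3) by auto
    show "card (\<pi> ` {1..n}) = card {..<n}" using card_image[OF x(2)] by simp
  qed
  have "bij_betw \<pi> {1..n} {..<n}" unfolding bij_betw_def using x(2) img by simp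
  moreover have "\<forall>i\<in>{1..n}. \<forall>k<n. F i (cuts x (Suc k)) - F i (cuts x k) \<le> F i (cuts x (Suc (\<pi> i))) - F i (cuts x (\<pi> i))"
  proof (intro ballI allI impI)
    fix i k assume i: "i \<in> {1..n}" and k: "k < n"
    have "fv i k x \<le> Mx i x" by (rule Mx_ge[OF k])
    also have "\<dots> \<le> fv i (\<pi> i) x" using x(3) i by blast
    finally show "F i (cuts x (Suc k)) - F i (cuts x k) \<le> F i (cuts x (Suc (\<pi> i))) - F i (cuts x (\<pi> i))"
      unfolding fv_def .
  qed
  moreover have "\<forall>k<n. cuts x k \<le> cuts x (Suc k)" using cuts_mono[OF x(1)] by blast
  moreover have "\<forall>k\<le>n. 0 \<le> cuts x k \<and> cuts x k \<le> 1" using cuts_cube[OF x(1)] by blast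
  ultimately show ?thesis using cuts_n by (intro exI[of _ "cuts x"] exI[of _ \<pi>]) simp
qed

end


lemma fu_UN: "finite I \<Longrightarrow> (\<And>i. i \<in> I \<Longrightarrow> fu (A i)) \<Longrightarrow> fu (\<Union>i\<in>I. A i)"
proof (induction I rule: finite_induct)
  case empty then show ?case by (simp add: fu_empty)
next
  case (insert x I) then show ?case by (simp add: fu_Un)
qed

lemma mono_chain:
  assumes "\<forall>k<n. a k \<le> (a (Suc k) :: real)"
  shows "i \<le> j \<Longrightarrow> j \<le> n \<Longrightarrow> a i \<le> a j"
proof (induction j)
  case 0 then show ?case by simp
next
  case (Suc j)
  show ?case
  proof (cases "i = Suc j")
    case True then show ?thesis by simp
  next
    case False
    then have "a i \<le> a j" using Suc by simp
    also have "\<dots> \<le> a (Suc j)" using assms Suc.prems by simp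
    finally show ?thesis .
  qed
qed

lemma find_cell:
  fixes a :: "nat \<Rightarrow> real"
  shows "a 0 < t \<Longrightarrow> t \<le> a m \<Longrightarrow> \<exists>k<m. a k < t \<and> t \<le> a (Suc k)"
proof (induction m)
  case 0 then show ?case by simp
next
  case (Suc m)
  show ?case
  proof (cases "t \<le> a m")
    case True then show ?thesis using Suc by (meson less_SucI)
  next
    case False then show ?thesis using Suc.prems by auto
  qed
qed

lemma extend_ef:
  assumes n1: "n \<ge> 1" and val: "\<forall>i\<in>{1..n}. valuation (v i)"
    and divY: "division n Y" and efY: "envy_free n v Y"
  shows "\<exists>X. complete_div n X \<and> envy_free n v X \<and> (\<forall>i\<in>{1..n}. util v Y i i \<le> util v X i i)"
proof -
  have Yfu: "fu (Y i)" "Y i \<subseteq> {0..1}" if "i \<in> {1..n}" for i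
    using divY that unfolding division_def fui_iff by auto
  define U where "U = (\<Union>j\<in>{1..n}. Y j)"
  define R where "R = {0..1} - U"
  have fuU: "fu U" unfolding U_def by (rule fu_UN) (auto simp: Yfu)
  have fuR: "fu R" unfolding R_def by (rule fu_diff[OF fu_interval[OF is_interval_cc] fuU]) simp
  have R01: "R \<subseteq> {0..1}" unfolding R_def by auto
  define F where "F i = cF (v i) R" for i
  interpret E: efs n F
  proof
    show "n \<ge> 1" by (rule n1)
    show "isCont (F i) t" if "i \<in> {1..n}" for i t
      unfolding F_def using cF_cont[OF _ fuR R01] val that by blast
    show "F i s \<le> F i t" if "i \<in> {1..n}" "0 \<le> s" "s \<le> t" "t \<le> 1" for i s t
      unfolding F_def using cF_mono[OF _ fuR R01] val that by blast
    show "F i 0 = 0" if "i \<in> {1..n}" for i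
      unfolding F_def using cF_0[OF _ fuR R01] val that by blast
  qed
  obtain a \<pi> where a: "a 0 = 0" "a n = 1" "\<forall>k<n. a k \<le> a (Suc k)" "\<forall>k\<le>n. 0 \<le> a k \<and> a k \<le> 1"
    and \<pi>: "bij_betw \<pi> {1..n} {..<n}"
    and ef: "\<forall>i\<in>{1..n}. \<forall>k<n. F i (a (Suc k)) - F i (a k) \<le> F i (a (Suc (\<pi> i))) - F i (a (\<pi> i))"
    using E.ef_cuts by blast
  have \<pi>n: "\<pi> i < n" if "i \<in> {1..n}" for i using \<pi> that unfolding bij_betw_def by auto
  define Z where "Z i = R \<inter> {a (\<pi> i)<..a (Suc (\<pi> i))}" for i
  define X where "X i = Y i \<union> Z i" for i
  have Zfu: "fu (Z i)" for i unfolding Z_def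
    by (rule fu_Int[OF fuR fu_interval]) (simp add: is_interval_1)
  have Z01: "Z i \<subseteq> {0..1}" for i unfolding Z_def using R01 by auto
  have ZU: "Z i \<inter> U = {}" for i unfolding Z_def R_def by auto
  have Zdisj: "Z i \<inter> Z j = {}" if "i \<in> {1..n}" "j \<in> {1..n}" "i \<noteq> j" for i j
  proof -
    have ne: "\<pi> i \<noteq> \<pi> j" using \<pi> that unfolding bij_betw_def inj_on_def by blast
    have dis: "{a k<..a (Suc k)} \<inter> {a l<..a (Suc l)} = {}" if "k < l" "l < n" for k l
    proof -
      have "a (Suc k) \<le> a l" using mono_chain[OF a(3), of "Suc k" l] that by simp
      then show ?thesis by auto
    qed
    show ?thesis
    proof (cases "\<pi> i < \<pi> j")
      case True then show ?thesis using dis[OF True \<pi>n[OF that(2)]] unfolding Z_def by auto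
    next
      case False
      then have "\<pi> j < \<pi> i" using ne by simp
      then have "{a (\<pi> j)<..a (Suc (\<pi> j))} \<inter> {a (\<pi> i)<..a (Suc (\<pi> i))} = {}"
        using dis \<pi>n[OF that(1)] by blast
      then show ?thesis unfolding Z_def by auto
    qed
  qed
  have Xfui: "finite_union_intervals (X i)" if "i \<in> {1..n}" for i
    unfolding fui_iff X_def using Yfu[OF that] Zfu Z01 by (auto intro: fu_Un)
  have Xdisj: "X i \<inter> X j = {}" if "i \<in> {1..n}" "j \<in> {1..n}" "i \<noteq> j" for i j
  proof -
    have "Y i \<inter> Y j = {}" using divY that unfolding division_def by blast
    moreover have "Y i \<subseteq> U" "Y j \<subseteq> U" unfolding U_def using that by auto
    ultimately show ?thesis unfolding X_def using ZU[of i] ZU[of j] Zdisj[OF that] by blast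
  qed
  have divX: "division n X" unfolding division_def using Xfui Xdisj by blast
  have cover: "{0..1} - (\<Union>i\<in>{1..n}. X i) \<subseteq> {0}"
  proof
    fix t assume t: "t \<in> {0..1} - (\<Union>i\<in>{1..n}. X i)"
    show "t \<in> {0}"
    proof (rule ccontr)
      assume "t \<notin> {0}"
      then have t0: "0 < t" using t by auto
      have tR: "t \<in> R" using t unfolding R_def U_def X_def by auto
      obtain k where k: "k < n" "a k < t" "t \<le> a (Suc k)"
        using find_cell[of a t n] t0 t a(1,2) by auto
      have "k \<in> \<pi> ` {1..n}" using \<pi> k(1) unfolding bij_betw_def by simp
      then obtain i where i: "i \<in> {1..n}" "\<pi> i = k" by blast
      have "t \<in> Z i" unfolding Z_def using tR k i by simp
      then have "t \<in> X i" unfolding X_def by simp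
      then show False using t i(1) by blast
    qed
  qed
  have compl: "complete_div n X" unfolding complete_div_def
    using divX finite_subset[OF cover] by simp
  have vsets: "S \<in> sets (v j)" if "j \<in> {1..n}" "fu S" "S \<subseteq> {0..1}" for j S
    using fu_sets[of "v j" S] val that by blast
  have vX: "util v X j i = util v Y j i + measure (v j) (Z i)" if "j \<in> {1..n}" "i \<in> {1..n}" for i j
  proof -
    interpret prob_space "v j" using valuation_prob val that(1) by blast
    have "Y i \<subseteq> U" using that(2) unfolding U_def by blast
    then have "Y i \<inter> Z i = {}" using ZU[of i] by blast
    then show ?thesis unfolding util_def X_def
      by (intro finite_measure_Union vsets that Yfu Zfu Z01)
  qed
  have vZ: "measure (v j) (Z i) = F j (a (Suc (\<pi> i))) - F j (a (\<pi> i))" if "j \<in> {1..n}" "i \<in> {1..n}" for i j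
    unfolding Z_def F_def using cF_diff[OF _ fuR R01, of "v j"] val that a(3) \<pi>n by auto
  have efX: "envy_free n v X" unfolding envy_free_def
  proof (intro ballI)
    fix j i assume j: "j \<in> {1..n}" and i: "i \<in> {1..n}"
    have "util v Y j i \<le> util v Y j j" using efY i j unfolding envy_free_def by blast
    moreover have "measure (v j) (Z i) \<le> measure (v j) (Z j)"
      using ef j \<pi>n[OF i] vZ[OF j i] vZ[OF j j] by simp
    ultimately show "util v X j i \<le> util v X j j" using vX[OF j i] vX[OF j j] by simp
  qed
  have "util v Y i i \<le> util v X i i" if "i \<in> {1..n}" for i
    using vX[OF that that] measure_nonneg[of "v i" "Z i"] by simp
  then show ?thesis using compl efX by blast
qed


lemma complete_lower:
  assumes n1: "n \<ge> 1" and val: "\<forall>i\<in>{1..n}. valuation (v i)"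
    and compl: "complete_div n X" and ef: "envy_free n v X" and i: "i \<in> {1..n}"
  shows "1 / real n \<le> util v X i i"
proof -
  have vi: "valuation (v i)" using val i by blast
  interpret prob_space "v i" using valuation_prob[OF vi] .
  have divX: "division n X" using compl unfolding complete_div_def by simp
  have Xfu: "fu (X j)" "X j \<subseteq> {0..1}" if "j \<in> {1..n}" for j
    using divX that unfolding division_def fui_iff by auto
  define W where "W = (\<Union>j\<in>{1..n}. X j)"
  define C where "C = {0..1} - W"
  have finC: "finite C" using compl unfolding complete_div_def C_def W_def by simp
  have W01: "W \<subseteq> {0..1}" unfolding W_def by (rule UN_least) (rule Xfu(2))
  have Csets: "C \<in> sets (v i)" using fu_sets[OF vi fu_finite[OF finC]] unfolding C_def by auto
  have I01: "{0..1::real} \<in> sets (v i)" using fu_sets[OF vi fu_interval[OF is_interval_cc]] by simp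
  have "W = {0..1} - C" unfolding C_def using W01 by auto
  then have "measure (v i) W = measure (v i) {0..1} - measure (v i) C"
    using finite_measure_Diff[OF I01 Csets] C_def by auto
  also have "measure (v i) {0..1} = 1" using prob_space valuation_space[OF vi] by simp
  also have "measure (v i) C = 0" by (rule valuation_finite_null[OF vi finC])
  finally have W1: "measure (v i) W = 1" by simp
  have "measure (v i) W = (\<Sum>j\<in>{1..n}. measure (v i) (X j))"
    unfolding W_def
  proof (rule finite_measure_finite_Union)
    show "finite {1..n}" by simp
    show "X ` {1..n} \<subseteq> events" using fu_sets[OF vi] Xfu by blast
    show "disjoint_family_on X {1..n}" using divX unfolding division_def disjoint_family_on_def by blast
  qed
  also have "\<dots> \<le> (\<Sum>j\<in>{1..n}. util v X i i)"
    by (rule sum_mono) (use ef i in \<open>auto simp: envy_free_def util_def\<close>)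
  also have "\<dots> = real n * util v X i i" by simp
  finally have "1 \<le> real n * util v X i i" using W1 by simp
  then show ?thesis using n1 by (simp add: field_simps)
qed

theorem proposition1:
  fixes n :: nat and v :: "nat \<Rightarrow> real measure" and \<alpha> :: real
  assumes "n \<ge> 1"
    and "\<forall>i\<in>{1..n}. valuation (v i)"
    and "\<alpha> > 1"
  shows "\<not> dumping_paradox n v utilitarian \<alpha>
       \<and> \<not> dumping_paradox n v egalitarian \<alpha>
       \<and> \<not> (\<exists>Y. partial_div n Y \<and> envy_free n v Y \<and>
              (\<forall>X. complete_div n X \<and> envy_free n v X \<longrightarrow> pareto_dominates n v Y X))"
proof -
  note n1 = assms(1) and val = assms(2) and a1 = assms(3)
  have ext: "\<exists>X. complete_div n X \<and> envy_free n v X \<and> (\<forall>i\<in>{1..n}. util v Y i i \<le> util v X i i)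
       \<and> (\<forall>i\<in>{1..n}. 1 / real n \<le> util v X i i)"
    if Y1: "partial_div n Y" and Y2: "envy_free n v Y" for Y
  proof -
    obtain X where X: "complete_div n X" "envy_free n v X" "\<forall>i\<in>{1..n}. util v Y i i \<le> util v X i i"
      using extend_ef[OF n1 val _ Y2] Y1 unfolding partial_div_def by blast
    then show ?thesis using complete_lower[OF n1 val X(1) X(2)] by blast
  qed
  have npos: "0 < 1 / real n" using n1 by simp
  have ne: "{1..n} \<noteq> {}" using n1 by simp
  have P1: "\<not> dumping_paradox n v utilitarian \<alpha>"
    unfolding dumping_paradox_def
  proof
    assume "\<exists>Y. partial_div n Y \<and> envy_free n v Y \<and>
      (\<forall>X. complete_div n X \<and> envy_free n v X \<longrightarrow> \<alpha> * utilitarian n v X \<le> utilitarian n v Y)"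
    then obtain Y where Y: "partial_div n Y" "envy_free n v Y"
      "\<forall>X. complete_div n X \<and> envy_free n v X \<longrightarrow> \<alpha> * utilitarian n v X \<le> utilitarian n v Y" by blast
    obtain X where X: "complete_div n X" "envy_free n v X" "\<forall>i\<in>{1..n}. util v Y i i \<le> util v X i i"
      "\<forall>i\<in>{1..n}. 1 / real n \<le> util v X i i" using ext[OF Y(1,2)] by blast
    have le: "utilitarian n v Y \<le> utilitarian n v X"
      unfolding utilitarian_def by (rule sum_mono) (use X(3) in auto)
    have "1 / real n \<le> util v X 1 1" using X(4) n1 by simp
    moreover have "util v X 1 1 \<le> utilitarian n v X"
      unfolding utilitarian_def
      by (rule member_le_sum) (use n1 X(4) npos in \<open>auto intro: order_trans[OF less_imp_le[OF npos]]\<close>)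
    ultimately have pos: "utilitarian n v X > 0" using npos by linarith
    have "\<alpha> * utilitarian n v X \<le> utilitarian n v Y" using Y(3) X(1,2) by blast
    moreover have "utilitarian n v X < \<alpha> * utilitarian n v X" using pos a1 by simp
    ultimately show False using le by linarith
  qed
  have P2: "\<not> dumping_paradox n v egalitarian \<alpha>"
    unfolding dumping_paradox_def
  proof
    assume "\<exists>Y. partial_div n Y \<and> envy_free n v Y \<and>
      (\<forall>X. complete_div n X \<and> envy_free n v X \<longrightarrow> \<alpha> * egalitarian n v X \<le> egalitarian n v Y)"
    then obtain Y where Y: "partial_div n Y" "envy_free n v Y"
      "\<forall>X. complete_div n X \<and> envy_free n v X \<longrightarrow> \<alpha> * egalitarian n v X \<le> egalitarian n v Y" by blast
    obtain X where X: "complete_div n X" "envy_free n v X" "\<forall>i\<in>{1..n}. util v Y i i \<le> util v X i i"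
      "\<forall>i\<in>{1..n}. 1 / real n \<le> util v X i i" using ext[OF Y(1,2)] by blast
    have finim: "finite ((\<lambda>i. util v X i i) ` {1..n})" "(\<lambda>i. util v X i i) ` {1..n} \<noteq> {}"
      using ne by auto
    obtain i0 where i0: "i0 \<in> {1..n}" "egalitarian n v X = util v X i0 i0"
      using Min_in[OF finim] unfolding egalitarian_def by auto
    have "egalitarian n v Y \<le> util v Y i0 i0"
      unfolding egalitarian_def by (rule Min_le) (use i0(1) in auto)
    also have "\<dots> \<le> egalitarian n v X" using X(3) i0 by simp
    finally have le: "egalitarian n v Y \<le> egalitarian n v X" .
    have "1 / real n \<le> util v X i0 i0" using X(4) i0(1) by blast
    then have pos: "egalitarian n v X > 0" using i0(2) npos by linarith
    have "\<alpha> * egalitarian n v X \<le> egalitarian n v Y" using Y(3) X(1,2) by blast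
    moreover have "egalitarian n v X < \<alpha> * egalitarian n v X" using pos a1 by simp
    ultimately show False using le by linarith
  qed
  have P3: "\<not> (\<exists>Y. partial_div n Y \<and> envy_free n v Y \<and>
              (\<forall>X. complete_div n X \<and> envy_free n v X \<longrightarrow> pareto_dominates n v Y X))"
  proof
    assume "\<exists>Y. partial_div n Y \<and> envy_free n v Y \<and>
              (\<forall>X. complete_div n X \<and> envy_free n v X \<longrightarrow> pareto_dominates n v Y X)"
    then obtain Y where Y: "partial_div n Y" "envy_free n v Y"
      "\<forall>X. complete_div n X \<and> envy_free n v X \<longrightarrow> pareto_dominates n v Y X" by blast
    obtain X where X: "complete_div n X" "envy_free n v X" "\<forall>i\<in>{1..n}. util v Y i i \<le> util v X i i"
      using ext[OF Y(1,2)] by blast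
    have "pareto_dominates n v Y X" using Y(3) X(1,2) by blast
    then obtain i where "i \<in> {1..n}" "util v X i i < util v Y i i" unfolding pareto_dominates_def by blast
    then show False using X(3) by fastforce
  qed
  show ?thesis using P1 P2 P3 by blast
qed

end
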